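(* Let $\mathbb{F}$ be any finite field. For inputs $\alpha,\beta\in\mathbb{F}$, choose $a_1,a_2,a_3,b_1,b_2,b_3\in\mathbb{F}$ uniformly at random subject to $a_1+a_2+a_3=\alpha$ and $b_1+b_2+b_3=\beta$, and define $$y_1=(a_2+a_3)(b_2+b_3),\qquad y_2=a_1b_1+a_1b_3+a_3b_1,\qquad y_3=a_1b_2+a_2b_1.$$ (These are the output shares of the $1$-private $3$-server greedy-monomial CNF HSS for multiplication, where server $j$ holds $(a_i,b_i)_{i\ne j}$ and $y_1+y_2+y_3=\alpha\beta$.) Then the joint distribution of $(y_1,y_2,y_3)$ depends only on $\alpha\beta$; that is, for all $\alpha,\beta,\alpha',\beta'\in\mathbb{F}$ with $\alpha\beta=\alpha'\beta'$, the distributions for $(\alpha,\beta)$ and $(\alpha',\beta')$ are identical. In particular this HSS is symmetrically private.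
   Context: An HSS is symmetrically private (SHSS) if for every function $f$ in its class and every input $\mathbf{x}$, the joint distribution of the output shares depends only on $f(\mathbf{x})$. *)

theory Defs
  imports "HOL-Probability.Probability_Mass_Function"
begin

definition share_inputs :: "'a::field \<Rightarrow> 'a \<Rightarrow> (('a \<times> 'a \<times> 'a) \<times> ('a \<times> 'a \<times> 'a)) set" where
  "share_inputs \<alpha> \<beta> =
     {((a1, a2, a3), (b1, b2, b3)). a1 + a2 + a3 = \<alpha> \<and> b1 + b2 + b3 = \<beta>}"

definition output_shares :: "('a::field \<times> 'a \<times> 'a) \<times> ('a \<times> 'a \<times> 'a) \<Rightarrow> 'a \<times> 'a \<times> 'a" where
  "output_shares ab = (case ab of ((a1, a2, a3), (b1, b2, b3)) \<Rightarrow>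
     ((a2 + a3) * (b2 + b3), a1 * b1 + a1 * b3 + a3 * b1, a1 * b2 + a2 * b1))"

definition output_dist :: "'a::{finite,field} \<Rightarrow> 'a \<Rightarrow> ('a \<times> 'a \<times> 'a) pmf" where
  "output_dist \<alpha> \<beta> = map_pmf output_shares (pmf_of_set (share_inputs \<alpha> \<beta>))"

end

theory Submission
  imports Defs
begin

lemma Lcard:
  fixes p q d :: "'a::{finite,field}"
  shows "card {(a2,b2). p*b2 + a2*q = d} =
     (if p=0 \<and> q=0 then (if d=0 then CARD('a)^2 else 0) else CARD('a))"
proof (cases "p = 0 \<and> q = 0")
  case True
  then show ?thesis
  proof (cases "d = 0")
    case True
    with \<open>p = 0 \<and> q = 0\<close> have "{(a2,b2). p*b2 + a2*q = d} = (UNIV::'a set) \<times> (UNIV::'a set)" by auto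
    then show ?thesis using True \<open>p = 0 \<and> q = 0\<close> by (simp add: card_cartesian_product power2_eq_square)
  next
    case False
    with \<open>p = 0 \<and> q = 0\<close> have "{(a2,b2). p*b2 + a2*q = d} = {}" by auto
    then show ?thesis using False \<open>p = 0 \<and> q = 0\<close> by simp
  qed
next
  case False
  show ?thesis
  proof (cases "p = 0")
    case False
    have "bij_betw (\<lambda>a2. (a2, (d - a2*q)/p)) UNIV {(a2,b2). p*b2 + a2*q = d}"
      by (rule bij_betw_byWitness[where f'=fst]) (auto simp: False field_simps)
    then show ?thesis using False by (simp add: bij_betw_same_card[symmetric])
  next
    case True
    with \<open>\<not> (p = 0 \<and> q = 0)\<close> have q: "q \<noteq> 0" by simp
    have "bij_betw (\<lambda>b2. ((d - p*b2)/q, b2)) UNIV {(a2,b2). p*b2 + a2*q = d}"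
      by (rule bij_betw_byWitness[where f'=snd]) (auto simp: q field_simps)
    then show ?thesis using q by (simp add: bij_betw_same_card[symmetric])
  qed
qed

definition Tset :: "'a::{finite,field} \<Rightarrow> 'a \<Rightarrow> 'a \<times> 'a \<times> 'a \<Rightarrow> (('a \<times> 'a) \<times> ('a \<times> 'a)) set" where
  "Tset \<alpha> \<beta> y = {((u,v),(a2,b2)). u * v = fst y \<and> (\<alpha>-u)*b2 + a2*(\<beta>-v) = snd (snd y)
      \<and> fst y + fst (snd y) + snd (snd y) = \<alpha>*\<beta>}"

definition Fc :: "'a::{finite,field} \<Rightarrow> 'a \<times> 'a \<times> 'a \<Rightarrow> nat" where
  "Fc c y = (if fst y + fst (snd y) + snd (snd y) = c then
      (if c = fst y then (if snd (snd y) = 0 then CARD('a)^2 else 0)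
          + (card {(u,v). u * v = fst y} - 1) * CARD('a)
       else card {(u,v::'a). u * v = fst y} * CARD('a)) else 0)"

lemma sum_special:
  assumes "finite P"
  shows "(\<Sum>x\<in>P. if x = p then (M::nat) else Q) =
    (if p \<in> P then M + (card P - 1) * Q else card P * Q)"
proof (cases "p \<in> P")
  case True
  have "(\<Sum>x\<in>P. if x = p then M else Q) = M + (\<Sum>x\<in>P - {p}. if x = p then M else Q)"
    using sum.remove[OF assms True, of "\<lambda>x. if x = p then M else Q"] by simp
  also have "(\<Sum>x\<in>P - {p}. if x = p then M else Q) = (\<Sum>x\<in>P - {p}. Q)"
    by (rule sum.cong) auto
  finally show ?thesis using True assms by (simp add: card_Diff_singleton)
next
  case False
  then have "(\<Sum>x\<in>P. if x = p then M else Q) = (\<Sum>x\<in>P. Q)"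
    by (intro sum.cong) auto
  then show ?thesis using False by simp
qed

lemma card_Tset:
  fixes \<alpha> \<beta> :: "'a::{finite,field}"
  shows "card (Tset \<alpha> \<beta> y) = Fc (\<alpha>*\<beta>) y"
proof (cases "fst y + fst (snd y) + snd (snd y) = \<alpha>*\<beta>")
  case False
  then show ?thesis by (simp add: Tset_def Fc_def)
next
  case True
  define P where "P = {(u,v::'a). u * v = fst y}"
  define L where "L = (\<lambda>(u,v). {(a2,b2). (\<alpha>-u)*b2 + a2*(\<beta>-v) = snd (snd y)})"
  have eq: "Tset \<alpha> \<beta> y = Sigma P L"
    using True by (auto simp: Tset_def P_def L_def)
  define M where "M = (if snd (snd y) = 0 then CARD('a)^2 else 0)"
  define Q where "Q = CARD('a)"
  have c1: "card (Sigma P L) = (\<Sum>x\<in>P. card (L x))"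
    by (rule card_SigmaI) auto
  have c2: "card (L x) = (if x = (\<alpha>,\<beta>) then M else Q)" for x
  proof -
    obtain u v where x: "x = (u,v)" by (cases x) auto
    show ?thesis unfolding x L_def M_def Q_def by (simp add: Lcard)
  qed
  have c3: "(\<Sum>x\<in>P. if x = (\<alpha>,\<beta>) then M else Q) =
     (if (\<alpha>,\<beta>) \<in> P then M + (card P - 1) * Q else card P * Q)"
    by (rule sum_special) (simp add: P_def)
  have "card (Tset \<alpha> \<beta> y) = (if (\<alpha>,\<beta>) \<in> P then M + (card P - 1) * Q else card P * Q)"
    unfolding eq c1 c2 c3 ..
  then show ?thesis using True unfolding Fc_def M_def Q_def P_def by auto
qed

definition psi' :: "'a::field \<Rightarrow> 'a \<Rightarrow> ('a \<times> 'a) \<times> ('a \<times> 'a) \<Rightarrow> ('a \<times> 'a \<times> 'a) \<times> ('a \<times> 'a \<times> 'a)" where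
  "psi' \<alpha> \<beta> z = (case z of ((u,v),(a2,b2)) \<Rightarrow> ((\<alpha>-u, a2, u-a2),(\<beta>-v, b2, v-b2)))"

lemma inj_psi': "inj (psi' \<alpha> \<beta>)"
  by (auto simp: inj_def psi'_def)

lemma S_eq: "share_inputs \<alpha> \<beta> = range (psi' \<alpha> \<beta>)"
proof
  show "share_inputs \<alpha> \<beta> \<subseteq> range (psi' \<alpha> \<beta>)"
  proof
    fix x assume "x \<in> share_inputs \<alpha> \<beta>"
    then obtain a1 a2 a3 b1 b2 b3 where x: "x = ((a1,a2,a3),(b1,b2,b3))"
      and s: "a1+a2+a3 = \<alpha>" "b1+b2+b3=\<beta>" by (auto simp: share_inputs_def)
    have "x = psi' \<alpha> \<beta> ((\<alpha>-a1, \<beta>-b1),(a2,b2))"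
      unfolding x psi'_def using s by (auto simp: algebra_simps)
    then show "x \<in> range (psi' \<alpha> \<beta>)" by blast
  qed
  show "range (psi' \<alpha> \<beta>) \<subseteq> share_inputs \<alpha> \<beta>"
    by (auto simp: psi'_def share_inputs_def)
qed

lemma out_psi': "output_shares (psi' \<alpha> \<beta> ((u,v),(a2,b2))) =
   (u * v, \<alpha>*\<beta> - u * v - ((\<alpha>-u)*b2 + a2*(\<beta>-v)), (\<alpha>-u)*b2 + a2*(\<beta>-v))"
  unfolding psi'_def output_shares_def by (simp add: algebra_simps)

lemma gen3: fixes P E c :: "'a::ab_group_add"
  shows "(P = y1 \<and> c - P - E = y2 \<and> E = y3) \<longleftrightarrow> (P = y1 \<and> E = y3 \<and> y1 + y2 + y3 = c)"
  by (auto simp: algebra_simps)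

lemma T_eq: "{z. output_shares (psi' \<alpha> \<beta> z) = y} = Tset \<alpha> \<beta> y"
proof -
  obtain y1 y2 y3 where y: "y = (y1,y2,y3)" by (cases y) auto
  have "output_shares (psi' \<alpha> \<beta> ((u,v),(a2,b2))) = y \<longleftrightarrow>
     (u * v = y1 \<and> (\<alpha>-u)*b2 + a2*(\<beta>-v) = y3 \<and> y1 + y2 + y3 = \<alpha>*\<beta>)" for u v a2 b2
  proof -
    have "output_shares (psi' \<alpha> \<beta> ((u,v),(a2,b2))) = y \<longleftrightarrow>
       (u * v = y1 \<and> \<alpha>*\<beta> - u * v - ((\<alpha>-u)*b2 + a2*(\<beta>-v)) = y2 \<and> (\<alpha>-u)*b2 + a2*(\<beta>-v) = y3)"
      unfolding out_psi' y by simp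
    also have "\<dots> \<longleftrightarrow> (u * v = y1 \<and> (\<alpha>-u)*b2 + a2*(\<beta>-v) = y3 \<and> y1 + y2 + y3 = \<alpha>*\<beta>)"
      by (rule gen3)
    finally show ?thesis .
  qed
  then show ?thesis unfolding Tset_def y by auto
qed

lemma pmf_out:
  fixes \<alpha> \<beta> :: "'a::{finite,field}"
  shows "pmf (output_dist \<alpha> \<beta>) y = real (Fc (\<alpha>*\<beta>) y) / real (card (UNIV :: (('a\<times>'a)\<times>('a\<times>'a)) set))"
proof -
  have "((\<alpha>,0,0),(\<beta>,0,0)) \<in> share_inputs \<alpha> \<beta>"
    by (simp add: share_inputs_def)
  then have ne: "share_inputs \<alpha> \<beta> \<noteq> {}" by blast
  have fin: "finite (share_inputs \<alpha> \<beta>)" by simp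
  have "pmf (output_dist \<alpha> \<beta>) y = measure (pmf_of_set (share_inputs \<alpha> \<beta>)) (output_shares -` {y})"
    by (simp add: output_dist_def pmf_map)
  also have "\<dots> = real (card (share_inputs \<alpha> \<beta> \<inter> output_shares -` {y})) / real (card (share_inputs \<alpha> \<beta>))"
    using ne fin by (simp add: measure_pmf_of_set)
  also have "share_inputs \<alpha> \<beta> \<inter> output_shares -` {y} = {x\<in>share_inputs \<alpha> \<beta>. output_shares x = y}"
    by auto
  also have "{x\<in>share_inputs \<alpha> \<beta>. output_shares x = y} = psi' \<alpha> \<beta> ` {z. output_shares (psi' \<alpha> \<beta> z) = y}"
    unfolding S_eq by auto
  also have "card \<dots> = card {z. output_shares (psi' \<alpha> \<beta> z) = y}"
    by (rule card_image) (rule inj_on_subset[OF inj_psi'], simp)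
  also have "\<dots> = Fc (\<alpha>*\<beta>) y"
    unfolding T_eq by (rule card_Tset)
  also have "card (share_inputs \<alpha> \<beta>) = card (UNIV :: (('a\<times>'a)\<times>('a\<times>'a)) set)"
    unfolding S_eq by (rule card_image) (rule inj_psi')
  finally show ?thesis .
qed

theorem mainTheorem18:
  fixes \<alpha> \<beta> \<alpha>' \<beta>' :: "'a::{finite,field}"
  assumes "\<alpha> * \<beta> = \<alpha>' * \<beta>'"
  shows "output_dist \<alpha> \<beta> = output_dist \<alpha>' \<beta>'"
  by (rule pmf_eqI) (simp add: pmf_out assms)

end
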